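(* Let $m\in\mathbb{N}$, $\boldsymbol{\sigma}\in\{0,1\}^m$, and let $\beta=\frac{\beta_1}{2}+\dots+\frac{\beta_m}{2^m}$ be $m$-bit. For $m$-bit $\alpha=\frac{\alpha_1}{2}+\dots+\frac{\alpha_m}{2^m}$ set $\alpha_{m+1}=0$, and let $j_1(u)=j(u;\alpha,\beta,\boldsymbol{\sigma})$ and $j_2(u)=j(u;\alpha,\beta,\boldsymbol{\sigma}^* )$ as defined in the context. Then: (1) For $u_1,u_2\in\{0,\dots,m-1\}$ with $u_1\ne u_2$, $$\sum_{\alpha\in\mathbb{Q}^*(2^m)}(\alpha_{m-u_1}\oplus\alpha_{m+1-j_1(u_1)})(\alpha_{m-u_2}\oplus\alpha_{m+1-j_2(u_2)})=2^{m-2}.$$ (2) For $u\in\{0,\dots,m-1\}$, $$\sum_{\alpha\in\mathbb{Q}^*(2^m)}(\alpha_{m-u}\oplus\alpha_{m+1-j_1(u)})(\alpha_{m-u}\oplus\alpha_{m+1-j_2(u)})=\begin{cases}2^{m-u-1} & \text{if } u\in\{0,1\},\\ 2^{m-u-1}\left(1+\sum_{j=1}^{u-1}2^j\big((\gamma_j\oplus1)\gamma_u+\gamma_j(\gamma_u\oplus1)\big)\right) & \text{if } u\in\{2,\dots,m-1\},\end{cases}$$ where $\gamma_j:=\beta_j\oplus\sigma_j$ for $j\in\{1,\dots,m-1\}$.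
   Context: $\oplus$ denotes addition modulo 2. A real number $\alpha\in[0,1)$ is called $m$-bit if $\alpha\in\mathbb{Q}(2^m):=\{0,\frac1{2^m},\dots,\frac{2^m-1}{2^m}\}$, i.e. $\alpha=\frac{\alpha_1}{2}+\dots+\frac{\alpha_m}{2^m}$ with $\alpha_j\in\{0,1\}$; $\mathbb{Q}^*(2^m):=\mathbb{Q}(2^m)\setminus\{0\}$. For $\boldsymbol{\sigma}=(\sigma_1,\dots,\sigma_m)\in\{0,1\}^m$, $\boldsymbol{\sigma}^*=(\sigma_1\oplus1,\dots,\sigma_m\oplus1)$. For $m$-bit $\alpha,\beta$, a shift $\boldsymbol{\tau}\in\{0,1\}^m$ and $0\le u\le m-1$, define $j(u;\alpha,\beta,\boldsymbol{\tau})=0$ if $u=0$; $j(u;\alpha,\beta,\boldsymbol{\tau})=0$ if $\alpha_{m+1-j}=\beta_j\oplus\tau_j$ for all $j=1,\dots,u$; and otherwise $j(u;\alpha,\beta,\boldsymbol{\tau})=\max\{j\le u:\alpha_{m+1-j}\ne\beta_j\oplus\tau_j\}$. *)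

theory Defs
  imports Complex_Main
begin

definition bxor :: "nat \<Rightarrow> nat \<Rightarrow> nat" (infixl "\<oplus>\<^sub>2" 65) where
  "x \<oplus>\<^sub>2 y = (x + y) mod 2"

definition Qm :: "nat \<Rightarrow> real set" where
  "Qm m = {real k / 2 ^ m | k. k < 2 ^ m}"

definition Qm_star :: "nat \<Rightarrow> real set" where
  "Qm_star m = Qm m - {0}"

(* binary digit: alpha = alpha_1/2 + alpha_2/4 + ...; alpha_i = floor(2^i alpha) mod 2.
   For an m-bit alpha this gives alpha_{m+1} = 0, matching the convention. *)
definition digit :: "real \<Rightarrow> nat \<Rightarrow> nat" where
  "digit a i = nat (\<lfloor>2 ^ i * a\<rfloor> mod 2)"

definition cshift :: "(nat \<Rightarrow> nat) \<Rightarrow> nat \<Rightarrow> nat" where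
  "cshift \<sigma> = (\<lambda>j. \<sigma> j \<oplus>\<^sub>2 1)"

definition jfun :: "nat \<Rightarrow> nat \<Rightarrow> real \<Rightarrow> real \<Rightarrow> (nat \<Rightarrow> nat) \<Rightarrow> nat" where
  "jfun m u a b \<tau> =
     (if u = 0 then 0
      else if (\<forall>j\<in>{1..u}. digit a (m + 1 - j) = digit b j \<oplus>\<^sub>2 \<tau> j) then 0
      else Max {j \<in> {1..u}. digit a (m + 1 - j) \<noteq> digit b j \<oplus>\<^sub>2 \<tau> j})"

end

theory Submission
  imports Defs
begin

definition kb :: "nat \<Rightarrow> nat \<Rightarrow> nat" where "kb k i = k div 2 ^ i mod 2"

fun Cr :: "(nat \<Rightarrow> nat) \<Rightarrow> nat \<Rightarrow> nat \<Rightarrow> nat" where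
  "Cr t 0 k = 0"
| "Cr t (Suc u) k = (if kb k u \<noteq> t (Suc u) then kb k u else Cr t u k)"

lemma kb_le1: "kb k i < 2" by (simp add: kb_def)

lemma Cr_lt2: "Cr t u k < 2"
  by (induction u) (auto simp: kb_le1)

lemma kb_mod: "i < w \<Longrightarrow> kb (k mod 2 ^ w) i = kb k i"
proof -
  assume "i < w"
  then obtain d where w: "w = i + Suc d" by (metis add_Suc_right less_iff_Suc_add add.commute)
  have "k mod 2 ^ w div 2 ^ i = k div 2 ^ i mod 2 ^ Suc d"
    using div_exp_mod_exp_eq[of k i "Suc d"] w by simp
  then show ?thesis unfolding kb_def by (simp add: mod_mod_cancel)
qed

lemma Cr_mod: "u \<le> w \<Longrightarrow> Cr t u (k mod 2 ^ w) = Cr t u k"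
  by (induction u) (auto simp: kb_mod)

lemma digit_k: "i \<le> m \<Longrightarrow> digit (real k / 2 ^ m) i = kb k (m - i)"
proof -
  assume "i \<le> m"
  then have "(2::real) ^ m = 2 ^ i * 2 ^ (m - i)" by (simp flip: power_add)
  then have "2 ^ i * (real k / 2 ^ m) = real k / real (2 ^ (m - i))" by simp
  then have "\<lfloor>2 ^ i * (real k / 2 ^ m)\<rfloor> = int (k div 2 ^ (m - i))"
    by (metis floor_divide_of_nat_eq of_int_of_nat_eq)
  then show ?thesis unfolding digit_def kb_def by (simp add: nat_mod_distrib)
qed

lemma digit_high: "digit (real k / 2 ^ m) (Suc m) = 0"
proof -
  have "2 ^ Suc m * (real k / 2 ^ m) = real (2 * k)" by simp
  then show ?thesis unfolding digit_def by (simp only: floor_of_nat) simp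
qed

lemma digit_zero: "digit 0 i = 0" by (simp add: digit_def)

lemma jfun_Suc:
  "jfun m (Suc u) a b \<tau> =
     (if digit a (m - u) \<noteq> digit b (Suc u) \<oplus>\<^sub>2 \<tau> (Suc u) then Suc u else jfun m u a b \<tau>)"
proof (cases "digit a (m - u) \<noteq> digit b (Suc u) \<oplus>\<^sub>2 \<tau> (Suc u)")
  case True
  let ?S = "{j \<in> {1..Suc u}. digit a (m + 1 - j) \<noteq> digit b j \<oplus>\<^sub>2 \<tau> j}"
  have mem: "Suc u \<in> ?S" using True by simp
  have "Max ?S = Suc u"
    by (rule Max_eqI) (use mem in auto)
  moreover have "\<not>(\<forall>j\<in>{1..Suc u}. digit a (m + 1 - j) = digit b j \<oplus>\<^sub>2 \<tau> j)"
    using mem by blast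
  ultimately show ?thesis using True unfolding jfun_def by (simp only: if_False if_True) simp
next
  case False
  have S: "{j \<in> {1..Suc u}. digit a (m + 1 - j) \<noteq> digit b j \<oplus>\<^sub>2 \<tau> j}
        = {j \<in> {1..u}. digit a (m + 1 - j) \<noteq> digit b j \<oplus>\<^sub>2 \<tau> j}"
    using False by (auto simp: le_Suc_eq)
  have A: "(\<forall>j\<in>{1..Suc u}. digit a (m + 1 - j) = digit b j \<oplus>\<^sub>2 \<tau> j)
        = (\<forall>j\<in>{1..u}. digit a (m + 1 - j) = digit b j \<oplus>\<^sub>2 \<tau> j)"
    using False by (auto simp: le_Suc_eq)
  show ?thesis
  proof (cases u)
    case 0
    then show ?thesis using False unfolding jfun_def by auto
  next
    case (Suc v)
    then show ?thesis using False S A unfolding jfun_def by simp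
  qed
qed

lemma link:
  "u < m \<Longrightarrow> digit (real k / 2 ^ m) (m + 1 - jfun m u (real k / 2 ^ m) b \<tau>)
     = Cr (\<lambda>j. digit b j \<oplus>\<^sub>2 \<tau> j) u k"
proof (induction u)
  case 0
  then show ?case by (simp add: jfun_def digit_high)
next
  case (Suc u)
  have d: "digit (real k / 2 ^ m) (m - u) = kb k u" using Suc.prems by (simp add: digit_k)
  show ?case
  proof (cases "kb k u \<noteq> digit b (Suc u) \<oplus>\<^sub>2 \<tau> (Suc u)")
    case True
    then show ?thesis using Suc.prems d by (simp add: jfun_Suc)
  next
    case False
    then show ?thesis using Suc d by (simp add: jfun_Suc)
  qed
qed

lemma sum_split_lt:
  fixes f :: "nat \<Rightarrow> nat"
  shows "(\<Sum>k<a+b. f k) = (\<Sum>k<a. f k) + (\<Sum>k=a..<a+b. f k)"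
  by (simp add: lessThan_atLeast0 sum.atLeastLessThan_concat)

lemma sum_periodic:
  fixes f :: "nat \<Rightarrow> nat"
  shows "(\<Sum>k<p*n. f (k mod p)) = n * (\<Sum>k<p. f k)"
proof (induction n)
  case 0
  then show ?case by simp
next
  case (Suc n)
  have "(\<Sum>k<p*Suc n. f (k mod p)) = (\<Sum>k<p*n + p. f (k mod p))" by (simp add: add.commute)
  also have "\<dots> = (\<Sum>k<p*n. f (k mod p)) + (\<Sum>k=p*n..<p*n + p. f (k mod p))"
    by (rule sum_split_lt)
  also have "(\<Sum>k=p*n..<p*n + p. f (k mod p)) = (\<Sum>k=0..<p. f ((p*n + k) mod p))"
    by (subst sum.atLeastLessThan_shift_0) (simp add: comp_def)
  also have "\<dots> = (\<Sum>k<p. f k)"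
    by (rule sum.cong) (auto simp: atLeast0LessThan)
  finally show ?case using Suc by simp
qed

lemma split2:
  fixes h :: "nat \<Rightarrow> nat \<Rightarrow> nat"
  shows "(\<Sum>k<2^(Suc u). h (k mod 2^u) (kb k u)) = (\<Sum>lo<2^u. h lo 0 + h lo 1)"
proof -
  have "(\<Sum>k<2^(Suc u). h (k mod 2^u) (kb k u)) = (\<Sum>k<2^u + 2^u. h (k mod 2^u) (kb k u))"
    by (simp add: mult_2)
  also have "\<dots> = (\<Sum>k<2^u. h (k mod 2^u) (kb k u)) + (\<Sum>k=2^u..<2^u + 2^u. h (k mod 2^u) (kb k u))"
    by (rule sum_split_lt)
  also have "(\<Sum>k<2^u. h (k mod 2^u) (kb k u)) = (\<Sum>k<2^u. h k 0)"
    by (rule sum.cong) (auto simp: kb_def)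
  also have "(\<Sum>k=2^u..<2^u + 2^u. h (k mod 2^u) (kb k u)) = (\<Sum>k=0..<2^u. h ((2^u + k) mod 2^u) (kb (2^u + k) u))"
    by (subst sum.atLeastLessThan_shift_0) (simp add: comp_def)
  also have "\<dots> = (\<Sum>k<2^u. h k 1)"
    by (rule sum.cong) (auto simp: kb_def atLeast0LessThan)
  finally show ?thesis by (simp add: sum.distrib)
qed

lemma split_main:
  fixes h :: "nat \<Rightarrow> nat \<Rightarrow> nat"
  assumes "u < m"
  shows "(\<Sum>k<2^m. h (k mod 2^u) (kb k u)) = 2^(m-u-1) * (\<Sum>lo<2^u. h lo 0 + h lo 1)"
proof -
  define g where "g x = h (x mod 2^u) (kb x u)" for x
  have gm: "g k = g (k mod 2^Suc u)" for k
    proof -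
    have "(2::nat)^u dvd 2^Suc u" by simp
    then have "k mod 2^Suc u mod 2^u = k mod 2^u" by (rule mod_mod_cancel)
    then show ?thesis unfolding g_def using kb_mod[of u "Suc u" k] by simp
  qed
  have "m = Suc u + (m - u - 1)" using assms by simp
  then have pm: "(2::nat)^m = 2^Suc u * 2^(m-u-1)" by (metis power_add)
  have "(\<Sum>k<2^m. g k) = (\<Sum>k<2^Suc u * 2^(m-u-1). g (k mod 2^Suc u))"
    by (simp only: pm flip: gm)
  also have "\<dots> = 2^(m-u-1) * (\<Sum>k<2^Suc u. g k)" by (rule sum_periodic)
  finally show ?thesis unfolding g_def using split2[of h u] by (simp del: power_Suc)
qed

lemma lt2_cases: "(c::nat) < 2 \<Longrightarrow> c = 0 \<or> c = 1" by auto

lemma bx_sum1: "(c::nat) < 2 \<Longrightarrow> (0 \<oplus>\<^sub>2 c) + (1 \<oplus>\<^sub>2 c) = 1"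
  by (auto simp: less_2_cases_iff bxor_def)

lemma bx_sum2: "(c::nat) < 2 \<Longrightarrow> d < 2 \<Longrightarrow>
   (0 \<oplus>\<^sub>2 c) * (0 \<oplus>\<^sub>2 d) + (1 \<oplus>\<^sub>2 c) * (1 \<oplus>\<^sub>2 d) = (if c = d then 1 else 0)"
  by (auto simp: less_2_cases_iff bxor_def)

lemma bx_lt2: "x \<oplus>\<^sub>2 y < 2" by (simp add: bxor_def)

definition NN :: "(nat \<Rightarrow> nat) \<Rightarrow> nat \<Rightarrow> nat \<Rightarrow> nat" where
  "NN t u v = (\<Sum>lo<2^u. if Cr t u lo = v then 1 else 0)"

lemma Cr_Suc_mod: "Cr t (Suc u) k = (if kb k u \<noteq> t (Suc u) then kb k u else Cr t u (k mod 2^u))"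
  by (simp add: Cr_mod)

lemma NN_Suc:
  assumes "t (Suc u) < 2" "v < 2"
  shows "NN t (Suc u) v = NN t u v + 2^u * (if t (Suc u) \<noteq> v then 1 else 0)"
proof -
  define h where "h lo b = (if (if b \<noteq> t (Suc u) then b else Cr t u lo) = v then 1 else (0::nat))" for lo b :: nat
  have "NN t (Suc u) v = (\<Sum>k<2^Suc u. h (k mod 2^u) (kb k u))"
    unfolding NN_def h_def by (simp only: Cr_Suc_mod)
  also have "\<dots> = (\<Sum>lo<2^u. h lo 0 + h lo 1)" by (rule split2)
  also have "\<dots> = (\<Sum>lo<2^u. (if Cr t u lo = v then 1 else 0) + (if t (Suc u) \<noteq> v then 1 else 0))"
    by (rule sum.cong) (use assms in \<open>auto simp: less_2_cases_iff h_def\<close>)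
  finally show ?thesis by (simp add: sum.distrib NN_def)
qed

lemma NN_closed:
  assumes "\<forall>j. t j < 2" "v < 2"
  shows "NN t u v = (if v = 0 then 1 else 0) + (\<Sum>j\<in>{1..u}. 2^(j-1) * (if t j \<noteq> v then 1 else 0))"
proof (induction u)
  case 0
  then show ?case by (simp add: NN_def)
next
  case (Suc u)
  then show ?case using assms by (simp add: NN_Suc)
qed

definition CC :: "(nat \<Rightarrow> nat) \<Rightarrow> (nat \<Rightarrow> nat) \<Rightarrow> nat \<Rightarrow> nat" where
  "CC t1 t2 u = (\<Sum>lo<2^u. if Cr t1 u lo = Cr t2 u lo then 1 else 0)"

lemma CC_Suc:
  assumes t1: "\<forall>j. t1 j < 2" and t2: "\<forall>j. t2 j = 1 - t1 j"
  shows "CC t1 t2 (Suc w) = 1 + (\<Sum>j\<in>{1..w}. 2^j * (if t1 j \<noteq> t1 (Suc w) then 1 else 0))"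
proof -
  define g where "g = t1 (Suc w)"
  have g2: "g < 2" using t1 by (simp add: g_def)
  define h where "h lo b = (if (if b \<noteq> t1 (Suc w) then b else Cr t1 w lo)
       = (if b \<noteq> t2 (Suc w) then b else Cr t2 w lo) then 1 else (0::nat))" for lo b :: nat
  have "CC t1 t2 (Suc w) = (\<Sum>k<2^Suc w. h (k mod 2^w) (kb k w))"
    unfolding CC_def h_def by (simp only: Cr_Suc_mod)
  also have "\<dots> = (\<Sum>lo<2^w. h lo 0 + h lo 1)" by (rule split2)
  also have "\<dots> = (\<Sum>lo<2^w. (if Cr t1 w lo = g then 1 else 0) + (if Cr t2 w lo = 1 - g then 1 else 0))"
  proof (rule sum.cong)
    fix lo
    have "Cr t1 w lo < 2" "Cr t2 w lo < 2" by (rule Cr_lt2)+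
    then show "h lo 0 + h lo 1 = (if Cr t1 w lo = g then 1 else 0) + (if Cr t2 w lo = 1 - g then 1 else 0)"
      using g2 t2 unfolding h_def g_def by (auto simp: less_2_cases_iff)
  qed simp
  also have "\<dots> = NN t1 w g + NN t2 w (1 - g)" by (simp add: sum.distrib NN_def)
  also have "\<dots> = 1 + (\<Sum>j\<in>{1..w}. 2^j * (if t1 j \<noteq> g then 1 else 0))"
  proof -
    have t2': "\<forall>j. t2 j < 2" using t2 by (metis diff_le_self le_less_trans lessI one_add_one plus_1_eq_Suc)
    have "NN t1 w g = (if g = 0 then 1 else 0) + (\<Sum>j\<in>{1..w}. 2^(j-1) * (if t1 j \<noteq> g then 1 else 0))"
      using NN_closed[OF t1 g2] .
    moreover have "NN t2 w (1-g) = (if 1 - g = 0 then 1 else 0) + (\<Sum>j\<in>{1..w}. 2^(j-1) * (if t2 j \<noteq> 1 - g then 1 else 0))"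
      using NN_closed[OF t2'] by simp
    moreover have "(\<Sum>j\<in>{1..w}. 2^(j-1) * (if t2 j \<noteq> 1 - g then 1 else (0::nat)))
       = (\<Sum>j\<in>{1..w}. 2^(j-1) * (if t1 j \<noteq> g then 1 else 0))"
    proof (rule sum.cong)
      fix j
      have "t1 j < 2" using t1 by blast
      then show "2^(j-1) * (if t2 j \<noteq> 1 - g then 1 else (0::nat)) = 2^(j-1) * (if t1 j \<noteq> g then 1 else 0)"
        using t2 g2 by (auto simp: less_2_cases_iff)
    qed simp
    moreover have "(\<Sum>j\<in>{1..w}. 2^j * (if t1 j \<noteq> g then 1 else 0))
       = (\<Sum>j\<in>{1..w}. 2^(j-1) * (if t1 j \<noteq> g then 1 else 0)) + (\<Sum>j\<in>{1..w}. 2^(j-1) * (if t1 j \<noteq> g then 1 else (0::nat)))"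
    proof -
      have "(\<Sum>j\<in>{1..w}. 2^j * (if t1 j \<noteq> g then 1 else (0::nat)))
          = (\<Sum>j\<in>{1..w}. 2 * (2^(j-1) * (if t1 j \<noteq> g then 1 else 0)))"
        by (rule sum.cong) (auto simp: power_eq_if)
      then show ?thesis by (simp add: sum_distrib_left[symmetric] mult_2 sum.distrib)
    qed
    ultimately show ?thesis using g2 by auto
  qed
  finally show ?thesis by (simp add: g_def)
qed

lemma part1_k:
  assumes ab: "a < b" and bm: "b < m"
  shows "(\<Sum>k<2^m. (kb k a \<oplus>\<^sub>2 Cr ta a k) * (kb k b \<oplus>\<^sub>2 Cr tb b k)) = 2^(m-2)"
proof -
  define h where "h lo x = (kb lo a \<oplus>\<^sub>2 Cr ta a lo) * (x \<oplus>\<^sub>2 Cr tb b lo)" for lo x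
  have e: "(kb k a \<oplus>\<^sub>2 Cr ta a k) * (kb k b \<oplus>\<^sub>2 Cr tb b k) = h (k mod 2^b) (kb k b)" for k
    unfolding h_def using ab by (simp add: kb_mod Cr_mod)
  have "(\<Sum>k<2^m. (kb k a \<oplus>\<^sub>2 Cr ta a k) * (kb k b \<oplus>\<^sub>2 Cr tb b k))
      = (\<Sum>k<2^m. h (k mod 2^b) (kb k b))" by (simp only: e)
  also have "\<dots> = 2^(m-b-1) * (\<Sum>lo<2^b. h lo 0 + h lo 1)" by (rule split_main[OF bm])
  also have "(\<Sum>lo<2^b. h lo 0 + h lo 1) = (\<Sum>lo<2^b. kb lo a \<oplus>\<^sub>2 Cr ta a lo)"
  proof (rule sum.cong)
    fix lo
    have "(0 \<oplus>\<^sub>2 Cr tb b lo) + (1 \<oplus>\<^sub>2 Cr tb b lo) = 1" by (rule bx_sum1[OF Cr_lt2])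
    then show "h lo 0 + h lo 1 = kb lo a \<oplus>\<^sub>2 Cr ta a lo"
      unfolding h_def by (metis add_mult_distrib2 mult_1_right)
  qed simp
  also have "(\<Sum>lo<2^b. kb lo a \<oplus>\<^sub>2 Cr ta a lo) = (\<Sum>lo<2^b. (\<lambda>l x. x \<oplus>\<^sub>2 Cr ta a l) (lo mod 2^a) (kb lo a))"
    by (simp add: Cr_mod)
  also have "\<dots> = 2^(b-a-1) * (\<Sum>lo<2^a. (0 \<oplus>\<^sub>2 Cr ta a lo) + (1 \<oplus>\<^sub>2 Cr ta a lo))"
    by (rule split_main[OF ab])
  also have "\<dots> = 2^(b-a-1) * 2^a"
  proof -
    have "\<And>lo. (0 \<oplus>\<^sub>2 Cr ta a lo) + (1 \<oplus>\<^sub>2 Cr ta a lo) = 1" by (rule bx_sum1[OF Cr_lt2])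
    then show ?thesis by (simp only:) simp
  qed
  finally have "(\<Sum>k<2^m. (kb k a \<oplus>\<^sub>2 Cr ta a k) * (kb k b \<oplus>\<^sub>2 Cr tb b k)) = 2^(m-b-1) * (2^(b-a-1) * 2^a)" .
  also have "\<dots> = (2::nat)^((m-b-1) + ((b-a-1) + a))" by (simp add: power_add)
  also have "(m-b-1) + ((b-a-1) + a) = m - 2" using ab bm by simp
  finally show ?thesis .
qed

lemma part2_k:
  assumes um: "u < m"
  shows "(\<Sum>k<2^m. (kb k u \<oplus>\<^sub>2 Cr t1 u k) * (kb k u \<oplus>\<^sub>2 Cr t2 u k)) = 2^(m-u-1) * CC t1 t2 u"
proof -
  define h where "h lo x = (x \<oplus>\<^sub>2 Cr t1 u lo) * (x \<oplus>\<^sub>2 Cr t2 u lo)" for lo x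
  have e: "(kb k u \<oplus>\<^sub>2 Cr t1 u k) * (kb k u \<oplus>\<^sub>2 Cr t2 u k) = h (k mod 2^u) (kb k u)" for k
    unfolding h_def by (simp add: Cr_mod)
  have "(\<Sum>k<2^m. (kb k u \<oplus>\<^sub>2 Cr t1 u k) * (kb k u \<oplus>\<^sub>2 Cr t2 u k))
      = (\<Sum>k<2^m. h (k mod 2^u) (kb k u))" by (simp only: e)
  also have "\<dots> = 2^(m-u-1) * (\<Sum>lo<2^u. h lo 0 + h lo 1)" by (rule split_main[OF um])
  also have "(\<Sum>lo<2^u. h lo 0 + h lo 1) = CC t1 t2 u"
  proof -
    have "\<And>lo. h lo 0 + h lo 1 = (if Cr t1 u lo = Cr t2 u lo then 1 else 0)"
      unfolding h_def by (rule bx_sum2[OF Cr_lt2 Cr_lt2])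
    then show ?thesis unfolding CC_def by (simp only:)
  qed
  finally show ?thesis .
qed

lemma sumQ:
  fixes F :: "real \<Rightarrow> nat"
  assumes "F 0 = 0"
  shows "(\<Sum>\<alpha>\<in>Qm_star m. F \<alpha>) = (\<Sum>k<2^m. F (real k / 2^m))"
proof -
  have Q: "Qm m = (\<lambda>k. real k / 2^m) ` {..<2^m}" unfolding Qm_def by auto
  have fin: "finite (Qm m)" unfolding Q by simp
  have z: "0 \<in> Qm m" unfolding Q by force
  have "sum F (Qm m) = F 0 + sum F (Qm m - {0})" by (rule sum.remove[OF fin z])
  then have "sum F (Qm_star m) = sum F (Qm m)" using assms by (simp add: Qm_star_def)
  also have "\<dots> = (\<Sum>k<2^m. F (real k / 2^m))"
    unfolding Q by (rule sum.reindex_cong[where l="\<lambda>k. real k / 2^m"]) (auto simp: inj_on_def)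
  finally show ?thesis .
qed

lemma bx_neq: "x < 2 \<Longrightarrow> y < 2 \<Longrightarrow> ((x \<oplus>\<^sub>2 1) * y + x * (y \<oplus>\<^sub>2 1)) = (if x \<noteq> y then 1 else 0)"
  by (auto simp: less_2_cases_iff bxor_def)

lemma cshift_eq: "d \<oplus>\<^sub>2 cshift s j = 1 - (d \<oplus>\<^sub>2 s j)"
  unfolding bxor_def cshift_def by presburger

theorem lemma3:
  fixes m :: nat and \<sigma> :: "nat \<Rightarrow> nat" and \<beta> :: real
  assumes sigma_bits: "\<forall>j\<in>{1..m}. \<sigma> j \<in> {0, 1}"
    and beta_mbit: "\<beta> \<in> Qm m"
  shows
   "(\<forall>u1 u2. u1 < m \<longrightarrow> u2 < m \<longrightarrow> u1 \<noteq> u2 \<longrightarrow>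
      (\<Sum>\<alpha>\<in>Qm_star m.
         (digit \<alpha> (m - u1) \<oplus>\<^sub>2 digit \<alpha> (m + 1 - jfun m u1 \<alpha> \<beta> \<sigma>)) *
         (digit \<alpha> (m - u2) \<oplus>\<^sub>2 digit \<alpha> (m + 1 - jfun m u2 \<alpha> \<beta> (cshift \<sigma>))))
      = 2 ^ (m - 2))
  \<and> (\<forall>u. u < m \<longrightarrow>
      (\<Sum>\<alpha>\<in>Qm_star m.
         (digit \<alpha> (m - u) \<oplus>\<^sub>2 digit \<alpha> (m + 1 - jfun m u \<alpha> \<beta> \<sigma>)) *
         (digit \<alpha> (m - u) \<oplus>\<^sub>2 digit \<alpha> (m + 1 - jfun m u \<alpha> \<beta> (cshift \<sigma>))))
      = (if u \<le> 1 then 2 ^ (m - u - 1)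
         else 2 ^ (m - u - 1) *
           (1 + (\<Sum>j = 1..u - 1. 2 ^ j *
              (((digit \<beta> j \<oplus>\<^sub>2 \<sigma> j) \<oplus>\<^sub>2 1) * (digit \<beta> u \<oplus>\<^sub>2 \<sigma> u)
               + (digit \<beta> j \<oplus>\<^sub>2 \<sigma> j) * ((digit \<beta> u \<oplus>\<^sub>2 \<sigma> u) \<oplus>\<^sub>2 1))))))"
proof -
  define t1 where "t1 = (\<lambda>j. digit \<beta> j \<oplus>\<^sub>2 \<sigma> j)"
  define t2 where "t2 = (\<lambda>j. digit \<beta> j \<oplus>\<^sub>2 cshift \<sigma> j)"
  have t1b: "\<forall>j. t1 j < 2" unfolding t1_def by (simp add: bx_lt2)
  have t21: "\<forall>j. t2 j = 1 - t1 j" unfolding t1_def t2_def by (simp add: cshift_eq)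
  have dk: "digit (real k / 2^m) (m - u) = kb k u" if "u < m" for k u
    using that by (simp add: digit_k)
  have lk1: "digit (real k / 2 ^ m) (Suc m - jfun m u (real k / 2 ^ m) \<beta> \<sigma>) = Cr t1 u k"
    if "u < m" for k u using link[OF that] unfolding t1_def by simp
  have lk2: "digit (real k / 2 ^ m) (Suc m - jfun m u (real k / 2 ^ m) \<beta> (cshift \<sigma>)) = Cr t2 u k"
    if "u < m" for k u using link[OF that] unfolding t2_def by simp
  have z: "(0::nat) \<oplus>\<^sub>2 0 = 0" by (simp add: bxor_def)
  have P1: "(\<Sum>\<alpha>\<in>Qm_star m.
         (digit \<alpha> (m - u1) \<oplus>\<^sub>2 digit \<alpha> (m + 1 - jfun m u1 \<alpha> \<beta> \<sigma>)) *
         (digit \<alpha> (m - u2) \<oplus>\<^sub>2 digit \<alpha> (m + 1 - jfun m u2 \<alpha> \<beta> (cshift \<sigma>))))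
      = 2 ^ (m - 2)" if u: "u1 < m" "u2 < m" "u1 \<noteq> u2" for u1 u2
  proof -
    have "(\<Sum>\<alpha>\<in>Qm_star m.
         (digit \<alpha> (m - u1) \<oplus>\<^sub>2 digit \<alpha> (m + 1 - jfun m u1 \<alpha> \<beta> \<sigma>)) *
         (digit \<alpha> (m - u2) \<oplus>\<^sub>2 digit \<alpha> (m + 1 - jfun m u2 \<alpha> \<beta> (cshift \<sigma>))))
      = (\<Sum>k<2^m. (kb k u1 \<oplus>\<^sub>2 Cr t1 u1 k) * (kb k u2 \<oplus>\<^sub>2 Cr t2 u2 k))"
      by (subst sumQ) (simp_all add: digit_zero z dk lk1 lk2 u)
    also have "\<dots> = 2 ^ (m - 2)"
    proof (cases "u1 < u2")
      case True
      then show ?thesis using part1_k[OF True u(2)] by simp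
    next
      case False
      then have "u2 < u1" using u by simp
      then show ?thesis using part1_k[OF \<open>u2 < u1\<close> u(1), of t2 t1] by (simp add: mult.commute)
    qed
    finally show ?thesis .
  qed
  have P2: "(\<Sum>\<alpha>\<in>Qm_star m.
         (digit \<alpha> (m - u) \<oplus>\<^sub>2 digit \<alpha> (m + 1 - jfun m u \<alpha> \<beta> \<sigma>)) *
         (digit \<alpha> (m - u) \<oplus>\<^sub>2 digit \<alpha> (m + 1 - jfun m u \<alpha> \<beta> (cshift \<sigma>))))
      = (if u \<le> 1 then 2 ^ (m - u - 1)
         else 2 ^ (m - u - 1) *
           (1 + (\<Sum>j = 1..u - 1. 2 ^ j *
              (((digit \<beta> j \<oplus>\<^sub>2 \<sigma> j) \<oplus>\<^sub>2 1) * (digit \<beta> u \<oplus>\<^sub>2 \<sigma> u)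
               + (digit \<beta> j \<oplus>\<^sub>2 \<sigma> j) * ((digit \<beta> u \<oplus>\<^sub>2 \<sigma> u) \<oplus>\<^sub>2 1)))))"
    if u: "u < m" for u
  proof -
    have "(\<Sum>\<alpha>\<in>Qm_star m.
         (digit \<alpha> (m - u) \<oplus>\<^sub>2 digit \<alpha> (m + 1 - jfun m u \<alpha> \<beta> \<sigma>)) *
         (digit \<alpha> (m - u) \<oplus>\<^sub>2 digit \<alpha> (m + 1 - jfun m u \<alpha> \<beta> (cshift \<sigma>))))
      = (\<Sum>k<2^m. (kb k u \<oplus>\<^sub>2 Cr t1 u k) * (kb k u \<oplus>\<^sub>2 Cr t2 u k))"
      by (subst sumQ) (simp_all add: digit_zero z dk lk1 lk2 u)
    also have "\<dots> = 2^(m-u-1) * CC t1 t2 u" by (rule part2_k[OF u])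
    also have "CC t1 t2 u = (if u \<le> 1 then 1 else
           (1 + (\<Sum>j = 1..u - 1. 2 ^ j *
              (((digit \<beta> j \<oplus>\<^sub>2 \<sigma> j) \<oplus>\<^sub>2 1) * (digit \<beta> u \<oplus>\<^sub>2 \<sigma> u)
               + (digit \<beta> j \<oplus>\<^sub>2 \<sigma> j) * ((digit \<beta> u \<oplus>\<^sub>2 \<sigma> u) \<oplus>\<^sub>2 1)))))"
    proof (cases u)
      case 0
      then show ?thesis by (simp add: CC_def)
    next
      case (Suc w)
      have "CC t1 t2 u = 1 + (\<Sum>j\<in>{1..w}. 2^j * (if t1 j \<noteq> t1 (Suc w) then 1 else 0))"
        unfolding Suc by (rule CC_Suc[OF t1b t21])
      also have "(\<Sum>j\<in>{1..w}. 2^j * (if t1 j \<noteq> t1 (Suc w) then 1 else 0)) =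
          (\<Sum>j = 1..u - 1. 2 ^ j *
              (((digit \<beta> j \<oplus>\<^sub>2 \<sigma> j) \<oplus>\<^sub>2 1) * (digit \<beta> u \<oplus>\<^sub>2 \<sigma> u)
               + (digit \<beta> j \<oplus>\<^sub>2 \<sigma> j) * ((digit \<beta> u \<oplus>\<^sub>2 \<sigma> u) \<oplus>\<^sub>2 1)))"
      proof -
        have "\<And>j. ((digit \<beta> j \<oplus>\<^sub>2 \<sigma> j) \<oplus>\<^sub>2 1) * (digit \<beta> u \<oplus>\<^sub>2 \<sigma> u)
               + (digit \<beta> j \<oplus>\<^sub>2 \<sigma> j) * ((digit \<beta> u \<oplus>\<^sub>2 \<sigma> u) \<oplus>\<^sub>2 1)
             = (if t1 j \<noteq> t1 (Suc w) then 1 else 0)"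
          unfolding t1_def Suc by (rule bx_neq[OF bx_lt2 bx_lt2])
        moreover have "u - 1 = w" using Suc by simp
        ultimately show ?thesis by (simp only:)
      qed
      finally show ?thesis using Suc by auto
    qed
    finally show ?thesis by simp
  qed
  show ?thesis using P1 P2 by blast
qed

end
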